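(* Let $u,v$ be variables and $a<b$ integers. Then $$\sum_{a<i<b}\frac{(qv)^{1/2-i}}{(q^au)_{i-a}\,(q^iuv)_{b-i}}=\frac{1}{1-qv}\left(\frac{(qv)^{3/2-b}}{(q^au)_{b-a-1}}-\frac{(qv)^{1/2-a}}{(q^{a+1}uv)_{b-a-1}}\right).$$ Moreover, $$\sum_{1\le i<b}\frac{(qv)^{1/2-i}}{(q)_{i-1}\,(q^iv)_{b-i}}=\frac{1}{1-qv}\,\frac{(qv)^{3/2-b}}{(q)_{b-2}}.$$
   Context: $(x)_n:=\prod_{j=0}^{n-1}(1-xq^j)$ for $n\ge0$. Identities of rational functions (with a fixed choice of $(qv)^{1/2}$ and integer powers thereof). *)

theory Defs
  imports Complex_Main
begin

definition qpoch :: "'a::field \<Rightarrow> 'a \<Rightarrow> nat \<Rightarrow> 'a" where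
  "qpoch x q n = (\<Prod>j<n. 1 - x * q ^ j)"

end

theory Submission
  imports Defs
begin

lemma qpoch_Suc: "qpoch x q (Suc m) = qpoch x q m * (1 - x * q ^ m)"
  by (simp add: qpoch_def)

lemma qpoch_Suc_left: "qpoch x q (Suc m) = (1 - x) * qpoch (x * q) q m"
  unfolding qpoch_def by (subst prod.lessThan_Suc_shift) (simp add: mult.assoc)

lemma alg_step:
  fixes A B x t :: "'a::field"
  assumes "A \<noteq> 0" "B \<noteq> 0" "1 - x \<noteq> 0" "1 - t * x \<noteq> 0" "t \<noteq> 0" "1 - t \<noteq> 0"
  shows "inverse t ^ Suc m / (A * (1 - x) * ((1 - t * x) * B))
       = (inverse t ^ Suc m / (A * (1 - x) * B) - inverse t ^ m / (A * ((1 - t * x) * B))) / (1 - t)"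
proof -
  have e: "inverse t ^ Suc m = inverse t ^ m / t" by (simp add: divide_inverse mult.commute)
  have c: "1 / (t * (1 - x) * (1 - t * x)) = (1 / (t * (1 - x)) - 1 / (1 - t * x)) / (1 - t)"
  proof -
    have "1 / (t * (1 - x)) - 1 / (1 - t * x) = ((1 - t * x) - t * (1 - x)) / (t * (1 - x) * (1 - t * x))"
      using assms by (simp add: field_simps)
    also have "(1 - t * x) - t * (1 - x) = 1 - t" by (simp add: algebra_simps)
    finally show ?thesis using assms by simp
  qed
  have "inverse t ^ Suc m / (A * (1 - x) * ((1 - t * x) * B)) = (inverse t ^ m / (A * B)) * (1 / (t * (1 - x) * (1 - t * x)))"
    unfolding e using assms by (simp add: field_simps)
  also have "\<dots> = (inverse t ^ m / (A * B)) * ((1 / (t * (1 - x)) - 1 / (1 - t * x)) / (1 - t))" by (simp only: c)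
  also have "\<dots> = (inverse t ^ Suc m / (A * (1 - x) * B) - inverse t ^ m / (A * ((1 - t * x) * B))) / (1 - t)"
  proof -
    have gen: "y / (A * B) * ((1 / (t * (1 - x)) - 1 / (1 - t * x)) / (1 - t))
       = (y / t / (A * (1 - x) * B) - y / (A * ((1 - t * x) * B))) / (1 - t)" for y
    proof -
      have "y / (A * B) * ((1 / (t * (1 - x)) - 1 / (1 - t * x)) / (1 - t))
          = (y / (A * B) * (1 / (t * (1 - x))) - y / (A * B) * (1 / (1 - t * x))) / (1 - t)"
        by (simp add: right_diff_distrib)
      also have "y / (A * B) * (1 / (t * (1 - x))) = y / t / (A * (1 - x) * B)" by (simp add: ac_simps)
      also have "y / (A * B) * (1 / (1 - t * x)) = y / (A * ((1 - t * x) * B))" by (simp add: ac_simps)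
      finally show ?thesis .
    qed
    show ?thesis unfolding e by (rule gen)
  qed
  finally show ?thesis .
qed

lemma core:
  fixes w v q t :: "'a::field" and n :: nat
  assumes ht: "t \<noteq> 0" and htq: "t = q * v" and h1t: "1 - t \<noteq> 0" and hn: "1 \<le> n"
    and hP: "\<forall>k\<in>{1..<n}. qpoch w q k \<noteq> 0 \<and> qpoch (w * v * q ^ k) q (n - k) \<noteq> 0"
    and hPn: "qpoch w q (n - 1) \<noteq> 0" and hQ1: "qpoch (w * v * q) q (n - 1) \<noteq> 0"
  shows "(\<Sum>k\<in>{1..<n}. inverse t ^ k / (qpoch w q k * qpoch (w * v * q ^ k) q (n - k)))
       = 1 / (1 - t) * (inverse t ^ (n - 1) / qpoch w q (n - 1) - 1 / qpoch (w * v * q) q (n - 1))"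
proof -
  define D where "D k = inverse t ^ (k - 1) / (qpoch w q (k - 1) * qpoch (w * v * q ^ k) q (n - k))" for k
  have step: "inverse t ^ k / (qpoch w q k * qpoch (w * v * q ^ k) q (n - k)) = (D (Suc k) - D k) / (1 - t)"
    if k: "k \<in> {1..<n}" for k
  proof -
    obtain m where km: "k = Suc m" using k by (cases k) auto
    obtain r where nr: "n - k = Suc r" using k by (cases "n - k") auto
    have nr2: "n - Suc k = r" using nr by simp
    have P: "qpoch w q k = qpoch w q m * (1 - w * q ^ m)" using km qpoch_Suc by simp
    have Q: "qpoch (w * v * q ^ k) q (n - k) = (1 - t * (w * q ^ m)) * qpoch (w * v * q ^ Suc k) q r"
      unfolding nr qpoch_Suc_left using km htq by (simp add: algebra_simps)
    have nz: "qpoch w q k \<noteq> 0" "qpoch (w * v * q ^ k) q (n - k) \<noteq> 0" using hP k by auto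
    have A: "qpoch w q m \<noteq> 0" "1 - w * q ^ m \<noteq> 0" using nz(1) P by auto
    have B: "qpoch (w * v * q ^ Suc k) q r \<noteq> 0" "1 - t * (w * q ^ m) \<noteq> 0" using nz(2) Q by auto
    have DS: "D (Suc k) = inverse t ^ Suc m / (qpoch w q m * (1 - w * q ^ m) * qpoch (w * v * q ^ Suc k) q r)"
      unfolding D_def using P km nr2 by simp
    have Dk: "D k = inverse t ^ m / (qpoch w q m * ((1 - t * (w * q ^ m)) * qpoch (w * v * q ^ Suc k) q r))"
      unfolding D_def using Q km by simp
    have L: "inverse t ^ k / (qpoch w q k * qpoch (w * v * q ^ k) q (n - k))
        = inverse t ^ Suc m / (qpoch w q m * (1 - w * q ^ m) * ((1 - t * (w * q ^ m)) * qpoch (w * v * q ^ Suc k) q r))"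
      unfolding P Q by (simp add: km)
    show ?thesis unfolding DS Dk L
      using alg_step[OF A(1) B(1) A(2) B(2) ht h1t] by simp
  qed
  have "(\<Sum>k\<in>{1..<n}. inverse t ^ k / (qpoch w q k * qpoch (w * v * q ^ k) q (n - k)))
      = (\<Sum>k\<in>{1..<n}. (D (Suc k) - D k) / (1 - t))" using step by (rule sum.cong[OF refl])
  also have "\<dots> = (D n - D 1) / (1 - t)"
    using sum_Suc_diff'[OF hn, of D] by (simp add: sum_divide_distrib[symmetric])
  also have "D n = inverse t ^ (n - 1) / qpoch w q (n - 1)" by (simp add: D_def qpoch_def)
  also have "D 1 = 1 / qpoch (w * v * q) q (n - 1)" by (simp add: D_def qpoch_def)
  finally show ?thesis by simp
qed


lemma spow:
  fixes s :: "'a::field"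
  assumes "s \<noteq> 0"
  shows "s powi (c - 2 * int k) = s powi c * inverse (s ^ 2) ^ k"
proof -
  have "s powi (c - 2 * int k) = s powi c * s powi (- int (2 * k))"
    using assms by (simp add: power_int_add[symmetric])
  also have "s powi (- int (2 * k)) = inverse (s ^ 2) ^ k"
  proof -
    have "s powi (- int (2 * k)) = inverse (s ^ (2 * k))" by (simp only: power_int_minus power_int_of_nat)
    then show ?thesis by (simp add: power_mult power_inverse)
  qed
  finally show ?thesis .
qed

lemma part1:
  fixes q u v s :: "'a::field" and a b :: int
  assumes hq: "q \<noteq> 0" and hs: "s \<noteq> 0" and hsq: "s ^ 2 = q * v"
    and hqv: "1 - q * v \<noteq> 0" and hab: "a < b"
    and H: "\<forall>i\<in>{a<..<b}. qpoch (q powi a * u) q (nat (i - a)) \<noteq> 0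
                          \<and> qpoch (q powi i * u * v) q (nat (b - i)) \<noteq> 0"
    and H1: "qpoch (q powi a * u) q (nat (b - a - 1)) \<noteq> 0"
    and H2: "qpoch (q powi (a + 1) * u * v) q (nat (b - a - 1)) \<noteq> 0"
  shows "(\<Sum>i\<in>{a<..<b}. s powi (1 - 2 * i) /
             (qpoch (q powi a * u) q (nat (i - a)) * qpoch (q powi i * u * v) q (nat (b - i))))
         = 1 / (1 - q * v) *
           (s powi (3 - 2 * b) / qpoch (q powi a * u) q (nat (b - a - 1))
            - s powi (1 - 2 * a) / qpoch (q powi (a + 1) * u * v) q (nat (b - a - 1)))"
proof -
  define t where "t = q * v"
  define n where "n = nat (b - a)"
  define w where "w = q powi a * u"
  have ht: "t \<noteq> 0" using hs hsq t_def by (metis power_not_zero)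
  have hst: "s ^ 2 = t" using hsq t_def by simp
  have hn: "1 \<le> n" using hab n_def by simp
  have bn: "b = a + int n" using hab n_def by simp
  have qa: "q powi (a + int k) = q powi a * q ^ k" for k
    using hq by (simp add: power_int_add)
  have Qk: "q powi (a + int k) * u * v = w * v * q ^ k" for k
    unfolding qa w_def by (simp add: ac_simps)
  have Q1: "q powi (a + 1) * u * v = w * v * q" using Qk[of 1] by simp
  have nb: "nat (b - (a + int k)) = n - k" for k using bn by simp
  have nb1: "nat (b - a - 1) = n - 1" using bn by simp
  have reidx: "(\<Sum>i\<in>{a<..<b}. s powi (1 - 2 * i) /
             (qpoch (q powi a * u) q (nat (i - a)) * qpoch (q powi i * u * v) q (nat (b - i))))
      = (\<Sum>k\<in>{1..<n}. s powi (1 - 2 * (a + int k)) /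
             (qpoch (q powi a * u) q (nat (a + int k - a)) * qpoch (q powi (a + int k) * u * v) q (nat (b - (a + int k)))))"
    by (rule sum.reindex_bij_witness[of _ "\<lambda>k. a + int k" "\<lambda>i. nat (i - a)"]) (auto simp: bn)
  also have "\<dots> = (\<Sum>k\<in>{1..<n}. s powi (1 - 2 * a) * (inverse t ^ k / (qpoch w q k * qpoch (w * v * q ^ k) q (n - k))))"
  proof (rule sum.cong[OF refl])
    fix k assume "k \<in> {1..<n}"
    have "s powi (1 - 2 * (a + int k)) = s powi (1 - 2 * a) * inverse t ^ k"
      using spow[OF hs, of "1 - 2 * a" k] hst by (simp add: algebra_simps)
    then show "s powi (1 - 2 * (a + int k)) /
             (qpoch (q powi a * u) q (nat (a + int k - a)) * qpoch (q powi (a + int k) * u * v) q (nat (b - (a + int k))))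
       = s powi (1 - 2 * a) * (inverse t ^ k / (qpoch w q k * qpoch (w * v * q ^ k) q (n - k)))"
      unfolding Qk nb by (simp add: w_def)
  qed
  also have "\<dots> = s powi (1 - 2 * a) * (\<Sum>k\<in>{1..<n}. inverse t ^ k / (qpoch w q k * qpoch (w * v * q ^ k) q (n - k)))"
    by (simp add: sum_distrib_left)
  also have "(\<Sum>k\<in>{1..<n}. inverse t ^ k / (qpoch w q k * qpoch (w * v * q ^ k) q (n - k)))
       = 1 / (1 - t) * (inverse t ^ (n - 1) / qpoch w q (n - 1) - 1 / qpoch (w * v * q) q (n - 1))"
  proof (rule core[OF ht t_def _ hn])
    show "1 - t \<noteq> 0" using hqv t_def by simp
    show "\<forall>k\<in>{1..<n}. qpoch w q k \<noteq> 0 \<and> qpoch (w * v * q ^ k) q (n - k) \<noteq> 0"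
    proof
      fix k assume k: "k \<in> {1..<n}"
      then have "a + int k \<in> {a<..<b}" using bn by auto
      with H have "qpoch (q powi a * u) q (nat (a + int k - a)) \<noteq> 0
                          \<and> qpoch (q powi (a + int k) * u * v) q (nat (b - (a + int k))) \<noteq> 0" by blast
      then show "qpoch w q k \<noteq> 0 \<and> qpoch (w * v * q ^ k) q (n - k) \<noteq> 0"
        unfolding Qk nb by (simp add: w_def)
    qed
    show "qpoch w q (n - 1) \<noteq> 0" using H1 nb1 w_def by simp
    show "qpoch (w * v * q) q (n - 1) \<noteq> 0" using H2 unfolding Q1 nb1 .
  qed
  finally have L: "(\<Sum>i\<in>{a<..<b}. s powi (1 - 2 * i) /
             (qpoch (q powi a * u) q (nat (i - a)) * qpoch (q powi i * u * v) q (nat (b - i))))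
     = s powi (1 - 2 * a) * (1 / (1 - t) * (inverse t ^ (n - 1) / qpoch w q (n - 1) - 1 / qpoch (w * v * q) q (n - 1)))" .
  have s3: "s powi (3 - 2 * b) = s powi (1 - 2 * a) * inverse t ^ (n - 1)"
  proof -
    have e: "3 - 2 * b = (1 - 2 * a) - 2 * int (n - 1)" using bn hn by simp
    show ?thesis unfolding e using spow[OF hs, of "1 - 2 * a" "n - 1"] hst by simp
  qed
  show ?thesis unfolding L s3 nb1 Q1
    by (simp add: w_def t_def algebra_simps)
qed


lemma part2:
  fixes q v s :: "'a::field" and c :: int
  assumes hq: "q \<noteq> 0" and hs: "s \<noteq> 0" and hsq: "s ^ 2 = q * v"
    and hqv: "1 - q * v \<noteq> 0" and hc: "2 \<le> c"
    and H: "\<forall>i\<in>{1..<c}. qpoch q q (nat (i - 1)) \<noteq> 0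
                         \<and> qpoch (q powi i * v) q (nat (c - i)) \<noteq> 0"
    and H1: "qpoch q q (nat (c - 2)) \<noteq> 0"
  shows "(\<Sum>i\<in>{1..<c}. s powi (1 - 2 * i) /
             (qpoch q q (nat (i - 1)) * qpoch (q powi i * v) q (nat (c - i))))
         = 1 / (1 - q * v) * (s powi (3 - 2 * c) / qpoch q q (nat (c - 2)))"
proof -
  define R where "R = qpoch (q powi (1 + 1) * 1 * v) q (nat (c - 1 - 1))"
  have c1: "nat (c - 1) = Suc (nat (c - 2))" using hc by simp
  have c2: "nat (c - 1 - 1) = nat (c - 2)" by simp
  have fac: "qpoch (q * v) q (nat (c - 1)) = (1 - q * v) * R"
    unfolding c1 qpoch_Suc_left R_def c2 by (simp add: power2_eq_square ac_simps)
  have "(1::int) \<in> {1..<c}" using hc by simp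
  then have "qpoch (q powi 1 * v) q (nat (c - 1)) \<noteq> 0" using H by blast
  then have R0: "R \<noteq> 0" using fac by simp
  have P1: "(\<Sum>i\<in>{1<..<c}. s powi (1 - 2 * i) /
             (qpoch (q powi 1 * 1) q (nat (i - 1)) * qpoch (q powi i * 1 * v) q (nat (c - i))))
         = 1 / (1 - q * v) *
           (s powi (3 - 2 * c) / qpoch (q powi 1 * 1) q (nat (c - 1 - 1))
            - s powi (1 - 2 * 1) / R)"
    unfolding R_def
  proof (rule part1[OF hq hs hsq hqv])
    show "1 < c" using hc by simp
    show "\<forall>i\<in>{1<..<c}. qpoch (q powi 1 * 1) q (nat (i - 1)) \<noteq> 0
                          \<and> qpoch (q powi i * 1 * v) q (nat (c - i)) \<noteq> 0" using H by auto
    show "qpoch (q powi 1 * 1) q (nat (c - 1 - 1)) \<noteq> 0" using H1 by simp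
    show "qpoch (q powi (1 + 1) * 1 * v) q (nat (c - 1 - 1)) \<noteq> 0" using R0 R_def by simp
  qed
  have ins: "{1..<c} = insert 1 {1<..<c}" using hc by auto
  have "(\<Sum>i\<in>{1..<c}. s powi (1 - 2 * i) /
             (qpoch q q (nat (i - 1)) * qpoch (q powi i * v) q (nat (c - i))))
      = s powi (-1) / ((1 - q * v) * R) + 1 / (1 - q * v) *
           (s powi (3 - 2 * c) / qpoch q q (nat (c - 2)) - s powi (-1) / R)"
    unfolding ins using P1 fac by (simp add: qpoch_def[of _ _ 0])
  also have "\<dots> = 1 / (1 - q * v) * (s powi (3 - 2 * c) / qpoch q q (nat (c - 2)))"
  proof -
    have g: "Y / ((1 - t) * R) + 1 / (1 - t) * (Z - Y / R) = 1 / (1 - t) * Z" for Y Z t :: 'a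
    proof -
      have "1 / (1 - t) * (Z - Y / R) = 1 / (1 - t) * Z - Y / ((1 - t) * R)"
        by (simp add: right_diff_distrib)
      then show ?thesis by simp
    qed
    show ?thesis by (rule g)
  qed
  finally show ?thesis .
qed

theorem lemma8p4:
  fixes q u v s :: "'a::field" and a b :: int
  assumes hq: "q \<noteq> 0" and hs: "s \<noteq> 0" and hsq: "s ^ 2 = q * v"
    and hqv: "1 - q * v \<noteq> 0"
  shows "(a < b \<and>
         (\<forall>i\<in>{a<..<b}. qpoch (q powi a * u) q (nat (i - a)) \<noteq> 0
                          \<and> qpoch (q powi i * u * v) q (nat (b - i)) \<noteq> 0) \<and>
         qpoch (q powi a * u) q (nat (b - a - 1)) \<noteq> 0 \<and>
         qpoch (q powi (a + 1) * u * v) q (nat (b - a - 1)) \<noteq> 0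
         \<longrightarrow>
         (\<Sum>i\<in>{a<..<b}. s powi (1 - 2 * i) /
             (qpoch (q powi a * u) q (nat (i - a)) * qpoch (q powi i * u * v) q (nat (b - i))))
         = 1 / (1 - q * v) *
           (s powi (3 - 2 * b) / qpoch (q powi a * u) q (nat (b - a - 1))
            - s powi (1 - 2 * a) / qpoch (q powi (a + 1) * u * v) q (nat (b - a - 1)))) \<and>
         (\<forall>c::int. 2 \<le> c \<and>
         (\<forall>i\<in>{1..<c}. qpoch q q (nat (i - 1)) \<noteq> 0
                         \<and> qpoch (q powi i * v) q (nat (c - i)) \<noteq> 0) \<and>
         qpoch q q (nat (c - 2)) \<noteq> 0
         \<longrightarrow>
         (\<Sum>i\<in>{1..<c}. s powi (1 - 2 * i) /
             (qpoch q q (nat (i - 1)) * qpoch (q powi i * v) q (nat (c - i))))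
         = 1 / (1 - q * v) * (s powi (3 - 2 * c) / qpoch q q (nat (c - 2))))"
  using part1[OF hq hs hsq hqv, of a b u] part2[OF hq hs hsq hqv] by blast

end
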